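(* Let $X$ be a Minkowski plane and $\mathbf{a}_1,\mathbf{a}_2,\mathbf{a}_3\in X\setminus\{\mathbf{o}\}$. The configuration $\{\mathbf{o}\mathbf{a}_1,\mathbf{o}\mathbf{a}_2,\mathbf{o}\mathbf{a}_3\}$ is a floating FT configuration if and only if it is not pointed and all angles $\sphericalangle\mathbf{a}_i\mathbf{o}\mathbf{a}_j$ ($i\neq j$) are critical.
   Context: A Minkowski plane is a two-dimensional real normed space $(X,\|\cdot\|)$. A Fermat-Torricelli (FT) point of finitely many points $\mathbf{x}_1,\dots,\mathbf{x}_n$ is a minimizer of $\mathbf{x}\mapsto\sum_i\|\mathbf{x}-\mathbf{x}_i\|$. A configuration $\{\mathbf{x}_0\mathbf{x}_i: i=1,\dots,n\}$ (segments from $\mathbf{x}_0$ with $\mathbf{x}_i\neq\mathbf{x}_0$) is a floating FT configuration if $\mathbf{x}_0$ is an FT point of $\{\mathbf{x}_1,\dots,\mathbf{x}_n\}$. It is pointed if there is a line $H$ through $\mathbf{x}_0$ such that the relative interiors of all segments $\mathbf{x}_0\mathbf{x}_i$ lie in the same open half-plane bounded by $H$. The angle $\sphericalangle\mathbf{x}_1\mathbf{x}_0\mathbf{x}_2$ is the convex cone bounded by the rays from $\mathbf{x}_0$ through $\mathbf{x}_1$ and through $\mathbf{x}_2$; it is critical if there exists a point $\mathbf{x}_3\neq\mathbf{x}_0$ such that $\mathbf{x}_0$ is an FT point of $\{\mathbf{x}_1,\mathbf{x}_2,\mathbf{x}_3\}$. *)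

theory Defs
  imports "HOL-Analysis.Analysis"
begin

text \<open>A Minkowski plane is modelled as the plane real^2 equipped with an arbitrary
  norm N (every two-dimensional real normed space is linearly isometric to such a space).\<close>

definition minkowski_norm :: "(real^2 \<Rightarrow> real) \<Rightarrow> bool" where
  "minkowski_norm N \<longleftrightarrow>
     (\<forall>x. N x = 0 \<longleftrightarrow> x = 0) \<and>
     (\<forall>c x. N (c *\<^sub>R x) = \<bar>c\<bar> * N x) \<and>
     (\<forall>x y. N (x + y) \<le> N x + N y)"

definition FT_point :: "(real^2 \<Rightarrow> real) \<Rightarrow> real^2 \<Rightarrow> (real^2) list \<Rightarrow> bool" where
  "FT_point N x0 xs \<longleftrightarrow>
     (\<forall>x. (\<Sum>p\<leftarrow>xs. N (x0 - p)) \<le> (\<Sum>p\<leftarrow>xs. N (x - p)))"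

definition floating_FT_config :: "(real^2 \<Rightarrow> real) \<Rightarrow> real^2 \<Rightarrow> (real^2) list \<Rightarrow> bool" where
  "floating_FT_config N x0 xs \<longleftrightarrow> (\<forall>p\<in>set xs. p \<noteq> x0) \<and> FT_point N x0 xs"

text \<open>Pointed: there is a line H through x0 (with normal vector u) such that the relative
  interiors of all segments x0 p lie in the same open half-plane bounded by H.\<close>
definition pointed_config :: "real^2 \<Rightarrow> (real^2) list \<Rightarrow> bool" where
  "pointed_config x0 xs \<longleftrightarrow>
     (\<exists>u::real^2. u \<noteq> 0 \<and>
        (\<forall>p\<in>set xs. open_segment x0 p \<subseteq> {y. u \<bullet> (y - x0) > 0}))"

definition critical_angle :: "(real^2 \<Rightarrow> real) \<Rightarrow> real^2 \<Rightarrow> real^2 \<Rightarrow> real^2 \<Rightarrow> bool" where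
  "critical_angle N x1 x0 x2 \<longleftrightarrow> (\<exists>x3. x3 \<noteq> x0 \<and> FT_point N x0 [x1, x2, x3])"

end

theory Submission imports Defs begin

definition nm :: "(real^2 \<Rightarrow> real) \<Rightarrow> real^2 \<Rightarrow> real^2 \<Rightarrow> bool" where
  "nm N w x \<longleftrightarrow> (\<forall>v. inner w v \<le> N v) \<and> inner w x = N x"

lemma inner2: "inner (x::real^2) y = x$1*y$1 + x$2*y$2"
  by (simp add: inner_vec_def sum_2)


definition dt :: "real^2 \<Rightarrow> real^2 \<Rightarrow> real" where "dt x y = x$1 * y$2 - x$2 * y$1"

lemma dt_neg1[simp]: "dt (- x) y = - dt x y" by (simp add: dt_def)
lemma dt_neg2[simp]: "dt x (- y) = - dt x y" by (simp add: dt_def)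
lemma dt_swap: "dt y x = - dt x y" by (simp add: dt_def)
lemma dt_self[simp]: "dt x x = 0" by (simp add: dt_def)
lemma dt_scale1[simp]: "dt (c *\<^sub>R x) y = c * dt x y" by (simp add: dt_def algebra_simps)
lemma dt_scale2[simp]: "dt x (c *\<^sub>R y) = c * dt x y" by (simp add: dt_def algebra_simps)
lemma dt_add1: "dt (x + y) z = dt x z + dt y z" by (simp add: dt_def algebra_simps)
lemma dt_add2: "dt z (x + y) = dt z x + dt z y" by (simp add: dt_def algebra_simps)

lemma dt_inner_id: "dt w w' * dt x x' = inner w x * inner w' x' - inner w x' * inner w' x"
  by (simp add: dt_def inner2 algebra_simps)

lemma plucker: "dt p q * dt r s - dt p r * dt q s + dt p s * dt q r = 0"
  by (simp add: dt_def algebra_simps)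

lemma vec_id: "dt p q *\<^sub>R v = dt v q *\<^sub>R p + dt p v *\<^sub>R q"
  by (simp add: vec_eq_iff forall_2 dt_def algebra_simps)

lemma triple_orient: assumes "w1 + w2 + w3 = 0"
  shows "dt w2 w3 = dt w1 w2" "dt w3 w1 = dt w1 w2"
proof -
  have w3: "w3 = - w1 - w2" using assms by (simp add: eq_neg_iff_add_eq_0 add.assoc algebra_simps)
  show "dt w2 w3 = dt w1 w2" "dt w3 w1 = dt w1 w2" unfolding w3 by (simp_all add: dt_def algebra_simps)
qed

definition betw :: "real^2 \<Rightarrow> real^2 \<Rightarrow> real^2 \<Rightarrow> bool" where
  "betw x y1 y2 \<longleftrightarrow> (\<exists>\<alpha> \<beta>. \<alpha> > 0 \<and> \<beta> \<ge> 0 \<and> y1 = \<alpha> *\<^sub>R x + \<beta> *\<^sub>R y2)"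

lemma betw_gen: assumes "dt x y2 \<noteq> 0" "dt y1 y2 * dt x y2 > 0" "dt x y1 * dt x y2 \<ge> 0"
  shows "betw x y1 y2"
proof -
  let ?D = "dt x y2"
  have "?D *\<^sub>R y1 = dt y1 y2 *\<^sub>R x + dt x y1 *\<^sub>R y2" by (rule vec_id)
  hence "(1 / ?D) *\<^sub>R (?D *\<^sub>R y1) = (1 / ?D) *\<^sub>R (dt y1 y2 *\<^sub>R x + dt x y1 *\<^sub>R y2)"
    by simp
  hence "y1 = (dt y1 y2 / ?D) *\<^sub>R x + (dt x y1 / ?D) *\<^sub>R y2"
    using assms(1) by (simp add: scaleR_add_right)
  moreover have "dt y1 y2 / ?D > 0"
    using assms(2) by (simp add: zero_less_divide_iff zero_less_mult_iff)
  moreover have "dt x y1 / ?D \<ge> 0"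
    using assms(3) by (simp add: zero_le_divide_iff zero_le_mult_iff)
  ultimately show ?thesis unfolding betw_def by blast
qed

lemma betw_pos: "dt x y2 > 0 \<Longrightarrow> dt y1 y2 > 0 \<Longrightarrow> dt x y1 \<ge> 0 \<Longrightarrow> betw x y1 y2"
  by (rule betw_gen) auto
lemma betw_neg: "dt x y2 < 0 \<Longrightarrow> dt y1 y2 < 0 \<Longrightarrow> dt x y1 \<le> 0 \<Longrightarrow> betw x y1 y2"
  by (rule betw_gen) (auto intro: mult_neg_neg mult_nonpos_nonpos)


definition crit_dual :: "(real^2 \<Rightarrow> real) \<Rightarrow> real^2 \<Rightarrow> real^2 \<Rightarrow> bool" where
  "crit_dual N x y \<longleftrightarrow> (\<exists>w v z c. nm N w x \<and> nm N v y \<and> nm N z c \<and> c \<noteq> 0 \<and> w + v + z = 0)"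
definition ZS3 :: "(real^2 \<Rightarrow> real) \<Rightarrow> real^2 \<Rightarrow> real^2 \<Rightarrow> real^2 \<Rightarrow> bool" where
  "ZS3 N x y z \<longleftrightarrow> (\<exists>w1 w2 w3. nm N w1 x \<and> nm N w2 y \<and> nm N w3 z \<and> w1 + w2 + w3 = 0)"

lemma pos_from: "(x::real) > 0 \<Longrightarrow> x * y \<ge> 0 \<Longrightarrow> y \<ge> 0"
  by (simp add: zero_le_mult_iff)
lemma pos_from2: "(x::real) \<noteq> 0 \<Longrightarrow> x * y \<ge> 0 \<Longrightarrow> y > 0 \<Longrightarrow> x > 0"
  by (metis linorder_neqE_linordered_idom mult_neg_pos not_le)


lemma par_decomp: assumes "dt w x = 0" "x \<noteq> 0" shows "w = (inner w x / inner x x) *\<^sub>R x"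
proof -
  have xx: "inner x x \<noteq> 0" using assms(2) by simp
  have d: "w$1 * x$2 = w$2 * x$1" using assms(1) by (simp add: dt_def)
  have "inner x x *\<^sub>R w = inner w x *\<^sub>R x"
    using d by (simp add: vec_eq_iff forall_2 inner2 algebra_simps)
  hence "(1 / inner x x) *\<^sub>R (inner x x *\<^sub>R w) = (1 / inner x x) *\<^sub>R (inner w x *\<^sub>R x)" by simp
  thus ?thesis using xx by simp
qed

definition opp :: "real^2 \<Rightarrow> real^2 \<Rightarrow> bool" where "opp x y \<longleftrightarrow> (\<exists>t>0. y = (- t) *\<^sub>R x)"

lemma opp_sym: assumes "opp x y" shows "opp y x"
proof -
  obtain t where t: "t > 0" "y = (- t) *\<^sub>R x" using assms opp_def by blast
  have "(- (1/t)) *\<^sub>R y = x" using t by simp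
  thus ?thesis unfolding opp_def using t(1) by (metis zero_less_divide_1_iff)
qed


definition pointed3 :: "real^2 \<Rightarrow> real^2 \<Rightarrow> real^2 \<Rightarrow> bool" where
  "pointed3 x y z \<longleftrightarrow> (\<exists>u. inner u x > 0 \<and> inner u y > 0 \<and> inner u z > 0)"

lemma opp_dt: "opp x y \<Longrightarrow> dt x y = 0" unfolding opp_def by auto

lemma pos2: assumes "x \<noteq> 0" "y \<noteq> 0" "\<not> opp x y" shows "\<exists>u. inner u x > 0 \<and> inner u y > 0"
proof -
  define u where "u = (1 / norm x) *\<^sub>R x + (1 / norm y) *\<^sub>R y"
  have nx: "norm x > 0" "norm y > 0" using assms by auto
  have u0: "u \<noteq> 0"
  proof
    assume "u = 0"
    hence "(1 / norm y) *\<^sub>R y = - ((1 / norm x) *\<^sub>R x)" unfolding u_def by (simp add: eq_neg_iff_add_eq_0 add.commute)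
    hence "norm y *\<^sub>R ((1 / norm y) *\<^sub>R y) = norm y *\<^sub>R (- ((1 / norm x) *\<^sub>R x))" by simp
    hence "y = (- (norm y / norm x)) *\<^sub>R x" using nx by simp
    moreover have "norm y / norm x > 0" using nx by simp
    ultimately have "opp x y" unfolding opp_def by blast
    thus False using assms(3) by simp
  qed
  have ux: "inner u x = norm x / 2 * inner u u"
  proof -
    have xx: "inner x x = norm x * norm x" "inner y y = norm y * norm y" by (simp_all add: dot_square_norm power2_eq_square)
    have A: "norm x * norm y * inner u u = 2 * inner x y + 2 * (norm x * norm y)"
      unfolding u_def using nx xx by (simp add: inner_add_left inner_add_right inner_commute field_simps)
    have B: "norm y * inner u x = inner x y + norm x * norm y"
      unfolding u_def using nx xx by (simp add: inner_add_left inner_add_right inner_commute field_simps)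
    have "norm y * (2 * inner u x) = norm y * (norm x * inner u u)" using A B by algebra
    thus ?thesis using nx by simp
  qed
  have uy: "inner u y = norm y / 2 * inner u u"
  proof -
    have xx: "inner x x = norm x * norm x" "inner y y = norm y * norm y" by (simp_all add: dot_square_norm power2_eq_square)
    have A: "norm x * norm y * inner u u = 2 * inner x y + 2 * (norm x * norm y)"
      unfolding u_def using nx xx by (simp add: inner_add_left inner_add_right inner_commute field_simps)
    have B: "norm x * inner u y = inner x y + norm x * norm y"
      unfolding u_def using nx xx by (simp add: inner_add_left inner_add_right inner_commute field_simps)
    have "norm x * (2 * inner u y) = norm x * (norm y * inner u u)" using A B by algebra
    thus ?thesis using nx by simp
  qed
  have "inner u u > 0" using u0 by simp
  hence "norm x * inner u u > 0" "norm y * inner u u > 0" using nx by simp_all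
  hence "inner u x > 0" "inner u y > 0" using ux uy by simp_all
  thus ?thesis by blast
qed

lemma cone_pointed: assumes "x \<noteq> 0" "y \<noteq> 0" "dt x y \<noteq> 0" "D *\<^sub>R z = A *\<^sub>R x + B *\<^sub>R y"
  "D * A > 0" "D * B > 0" shows "pointed3 x y z"
proof -
  have "\<not> opp x y" using assms(3) opp_dt by blast
  then obtain u where u: "inner u x > 0" "inner u y > 0" using pos2 assms(1,2) by blast
  have "inner u (D *\<^sub>R z) = inner u (A *\<^sub>R x + B *\<^sub>R y)" using assms(4) by simp
  hence "D * inner u z = A * inner u x + B * inner u y" by (simp add: inner_add_right)
  hence "D * (D * inner u z) = (D * A) * inner u x + (D * B) * inner u y" by (simp add: algebra_simps)
  moreover have "(D * A) * inner u x > 0" "(D * B) * inner u y > 0" using u assms(5,6) by simp_all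
  ultimately have "(D * D) * inner u z > 0" by (simp add: mult.assoc)
  moreover have "D * D > 0" using assms(5) by (metis mult_eq_0_iff not_real_square_gt_zero zero_less_mult_iff)
  ultimately have "inner u z > 0" by (simp add: zero_less_mult_iff)
  thus ?thesis using u unfolding pointed3_def by blast
qed

lemma par_pointed: assumes "x \<noteq> 0" "z \<noteq> 0" "y = s *\<^sub>R x" "s > 0" "\<not> opp x z"
  shows "pointed3 x y z"
proof -
  obtain u where u: "inner u x > 0" "inner u z > 0" using pos2 assms(1,2,5) by blast
  have "inner u y > 0" using u assms(3,4) by simp
  thus ?thesis using u unfolding pointed3_def by blast
qed

lemma pointed3_perm: "pointed3 x y z \<Longrightarrow> pointed3 y x z" "pointed3 x y z \<Longrightarrow> pointed3 x z y"
  unfolding pointed3_def by blast+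

lemma par_sign: assumes "dt y x = 0" "x \<noteq> 0" "y \<noteq> 0"
  shows "\<exists>s. s \<noteq> 0 \<and> y = s *\<^sub>R x"
proof -
  have "y = (inner y x / inner x x) *\<^sub>R x" by (rule par_decomp[OF assms(1,2)])
  moreover hence "inner y x / inner x x \<noteq> 0" using assms(3) by (metis scaleR_zero_left)
  ultimately show ?thesis by blast
qed

lemma zero_case: assumes "dt y x = 0" "x \<noteq> 0" "y \<noteq> 0" "z \<noteq> 0" "\<not> pointed3 x y z"
  shows "opp x y \<or> opp x z"
proof -
  obtain s where s: "s \<noteq> 0" "y = s *\<^sub>R x" using par_sign[OF assms(1-3)] by blast
  show ?thesis
  proof (cases "s > 0")
    case True
    show ?thesis using par_pointed[OF assms(2,4) s(2) True] assms(5) by blast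
  next
    case False
    hence "y = (- (- s)) *\<^sub>R x" "- s > 0" using s by auto
    thus ?thesis unfolding opp_def by blast
  qed
qed

lemma pointed3_rot: "pointed3 a2 a3 a1 \<longleftrightarrow> pointed3 a1 a2 a3" "pointed3 a1 a3 a2 \<longleftrightarrow> pointed3 a1 a2 a3"
  unfolding pointed3_def by blast+

lemma opp_sign: "(x::real) \<noteq> 0 \<Longrightarrow> y \<noteq> 0 \<Longrightarrow> x * (- y) > 0 \<longleftrightarrow> ((x > 0) \<noteq> (y > 0))"
  by (cases "x > 0"; cases "y > 0") (auto simp: mult_less_0_iff)

lemma classify: assumes nz: "a1 \<noteq> 0" "a2 \<noteq> 0" "a3 \<noteq> 0" and np: "\<not> pointed3 a1 a2 a3"
  shows "(dt a1 a2 > 0 \<and> dt a2 a3 > 0 \<and> dt a3 a1 > 0) \<or> (dt a1 a2 < 0 \<and> dt a2 a3 < 0 \<and> dt a3 a1 < 0)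
    \<or> opp a1 a2 \<or> opp a1 a3 \<or> opp a2 a3"
proof -
  have sw: "dt a2 a1 = - dt a1 a2" "dt a3 a2 = - dt a2 a3" "dt a1 a3 = - dt a3 a1" by (fact dt_swap)+
  have I3: "dt a1 a2 *\<^sub>R a3 = (- dt a2 a3) *\<^sub>R a1 + (- dt a3 a1) *\<^sub>R a2"
    using vec_id[of a1 a2 a3] unfolding sw .
  have I1: "dt a2 a3 *\<^sub>R a1 = (- dt a3 a1) *\<^sub>R a2 + (- dt a1 a2) *\<^sub>R a3"
    using vec_id[of a2 a3 a1] unfolding sw .
  have I2: "dt a3 a1 *\<^sub>R a2 = (- dt a1 a2) *\<^sub>R a3 + (- dt a2 a3) *\<^sub>R a1"
    using vec_id[of a3 a1 a2] unfolding sw .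
  show ?thesis
  proof (cases "dt a1 a2 = 0 \<or> dt a2 a3 = 0 \<or> dt a3 a1 = 0")
    case True
    moreover have "opp a1 a2 \<or> opp a1 a3" if "dt a1 a2 = 0"
      using zero_case[of a2 a1 a3] nz np sw(1) that by simp
    moreover have "opp a1 a2 \<or> opp a2 a3" if "dt a2 a3 = 0"
    proof -
      have "opp a2 a3 \<or> opp a2 a1"
        by (rule zero_case[of a3 a2 a1]) (use nz np sw(2) that pointed3_rot(1) in simp_all)
      thus ?thesis using opp_sym by blast
    qed
    moreover have "opp a1 a3 \<or> opp a1 a2" if "dt a3 a1 = 0"
      by (rule zero_case[of a3 a1 a2]) (use nz np that pointed3_rot(2) in simp_all)
    ultimately show ?thesis by blast
  next
    case False
    hence n: "dt a1 a2 \<noteq> 0" "dt a2 a3 \<noteq> 0" "dt a3 a1 \<noteq> 0" by auto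
    have c3: "\<not> (dt a1 a2 * (- dt a2 a3) > 0 \<and> dt a1 a2 * (- dt a3 a1) > 0)"
      using cone_pointed[OF nz(1,2) n(1) I3] np by blast
    have c1: "\<not> (dt a2 a3 * (- dt a3 a1) > 0 \<and> dt a2 a3 * (- dt a1 a2) > 0)"
      using cone_pointed[OF nz(2,3) n(2) I1] np pointed3_rot by blast
    have c2: "\<not> (dt a3 a1 * (- dt a1 a2) > 0 \<and> dt a3 a1 * (- dt a2 a3) > 0)"
      using cone_pointed[OF nz(3,1) n(3) I2] np pointed3_rot by blast
    have lt: "dt a1 a2 < 0 \<longleftrightarrow> \<not> dt a1 a2 > 0" "dt a2 a3 < 0 \<longleftrightarrow> \<not> dt a2 a3 > 0"
      "dt a3 a1 < 0 \<longleftrightarrow> \<not> dt a3 a1 > 0" using n by linarith+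
    show ?thesis using c1 c2 c3 unfolding opp_sign[OF n(1) n(2)] opp_sign[OF n(1) n(3)]
      opp_sign[OF n(2) n(3)] opp_sign[OF n(2) n(1)] opp_sign[OF n(3) n(1)] opp_sign[OF n(3) n(2)] lt
      by blast
  qed
qed


lemma seg_iff: assumes "p \<noteq> 0"
  shows "open_segment 0 p \<subseteq> {y. inner u (y - 0) > 0} \<longleftrightarrow> inner u p > 0"
proof
  assume h: "open_segment 0 p \<subseteq> {y. inner u (y - 0) > 0}"
  have "midpoint 0 p \<in> open_segment 0 p" using assms by simp
  hence "midpoint 0 p \<in> {y. inner u (y - 0) > 0}" by (rule subsetD[OF h])
  hence "inner u (midpoint 0 p) > 0" by simp
  thus "inner u p > 0" unfolding midpoint_def by simp
next
  assume h: "inner u p > 0"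
  show "open_segment 0 p \<subseteq> {y. inner u (y - 0) > 0}"
  proof
    fix y assume "y \<in> open_segment 0 p"
    then obtain t where "0 < t" "t < 1" "y = (1 - t) *\<^sub>R 0 + t *\<^sub>R p" unfolding in_segment by blast
    thus "y \<in> {y. inner u (y - 0) > 0}" using h by simp
  qed
qed

lemma pointed_iff: assumes "a1 \<noteq> 0" "a2 \<noteq> 0" "a3 \<noteq> 0"
  shows "pointed_config 0 [a1, a2, a3] \<longleftrightarrow> pointed3 a1 a2 a3"
proof
  assume "pointed_config 0 [a1, a2, a3]"
  then obtain u where "u \<noteq> 0" "\<forall>p\<in>set [a1, a2, a3]. open_segment 0 p \<subseteq> {y. inner u (y - 0) > 0}"
    unfolding pointed_config_def by blast
  thus "pointed3 a1 a2 a3" unfolding pointed3_def using seg_iff assms by auto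
next
  assume "pointed3 a1 a2 a3"
  then obtain u where u: "inner u a1 > 0" "inner u a2 > 0" "inner u a3 > 0" unfolding pointed3_def by blast
  hence "u \<noteq> 0" by auto
  thus "pointed_config 0 [a1, a2, a3]" unfolding pointed_config_def using u seg_iff assms
    by (intro exI[of _ u]) auto
qed

context fixes N :: "real^2 \<Rightarrow> real" assumes MN: "minkowski_norm N"
begin

lemma N_zero[simp]: "N 0 = 0" using MN unfolding minkowski_norm_def by blast
lemma N_scale: "N (c *\<^sub>R x) = \<bar>c\<bar> * N x" using MN unfolding minkowski_norm_def by blast
lemma N_tri: "N (x + y) \<le> N x + N y" using MN unfolding minkowski_norm_def by blast
lemma N_eq0: "N x = 0 \<longleftrightarrow> x = 0" using MN unfolding minkowski_norm_def by blast
lemma N_neg[simp]: "N (- x) = N x" using N_scale[of "-1" x] by simp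
lemma N_nonneg: "N x \<ge> 0"
proof -
  have "N (x + - x) \<le> N x + N (-x)" by (rule N_tri)
  thus ?thesis by simp
qed
lemma N_pos: "x \<noteq> 0 \<Longrightarrow> N x > 0" using N_nonneg[of x] N_eq0[of x] by linarith
lemma N_sub: "N (x - y) = N (y - x)" using N_neg[of "y - x"] by simp
lemma N_tri_sub: "N (x - y) \<le> N x + N y"
  using N_tri[of x "-y"] by simp
lemma N_pscale: "c \<ge> 0 \<Longrightarrow> N (c *\<^sub>R x) = c * N x" using N_scale by simp

lemma N_convex_on: "convex_on UNIV N"
proof (rule convex_onI)
  fix x y :: "real^2" and t :: real assume "0 < t" "t < 1"
  have "N ((1 - t) *\<^sub>R x + t *\<^sub>R y) \<le> N ((1 - t) *\<^sub>R x) + N (t *\<^sub>R y)" by (rule N_tri)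
  also have "\<dots> = (1 - t) * N x + t * N y" using \<open>0<t\<close> \<open>t<1\<close> by (simp add: N_pscale)
  finally show "N ((1 - t) *\<^sub>R x + t *\<^sub>R y) \<le> (1 - t) * N x + t * N y" .
qed simp

lemma nm_bound: "nm N w x \<Longrightarrow> inner w v \<le> N v" unfolding nm_def by blast
lemma nm_eq: "nm N w x \<Longrightarrow> inner w x = N x" unfolding nm_def by blast
lemma nm_abs: "nm N w x \<Longrightarrow> \<bar>inner w v\<bar> \<le> N v"
  using nm_bound[of w x v] nm_bound[of w x "-v"] by (simp add: abs_le_iff)

lemma nm_scale: assumes "nm N w y" "y = s *\<^sub>R z" "s > 0" shows "nm N w z"
proof -
  have "s * inner w z = s * N z" using nm_eq[OF assms(1)] assms(2,3) by (simp add: N_pscale)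
  hence "inner w z = N z" using assms(3) by simp
  thus ?thesis using assms(1) unfolding nm_def by blast
qed

lemma FT_easy:
  assumes "nm N w1 p1" "nm N w2 p2" "nm N w3 p3" "w1 + w2 + w3 = 0"
  shows "FT_point N 0 [p1, p2, p3]"
  unfolding FT_point_def
proof
  fix x
  have "inner w1 (p1 - x) \<le> N (x - p1)" using nm_bound[OF assms(1), of "p1 - x"] N_sub[of p1 x] by simp
  moreover have "inner w2 (p2 - x) \<le> N (x - p2)" using nm_bound[OF assms(2), of "p2 - x"] N_sub[of p2 x] by simp
  moreover have "inner w3 (p3 - x) \<le> N (x - p3)" using nm_bound[OF assms(3), of "p3 - x"] N_sub[of p3 x] by simp
  moreover have "inner w1 (p1 - x) + inner w2 (p2 - x) + inner w3 (p3 - x)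
     = N p1 + N p2 + N p3 - inner (w1 + w2 + w3) x"
    using nm_eq[OF assms(1)] nm_eq[OF assms(2)] nm_eq[OF assms(3)]
    by (simp add: inner_diff_right inner_add_left)
  ultimately show "(\<Sum>p\<leftarrow>[p1, p2, p3]. N (0 - p)) \<le> (\<Sum>p\<leftarrow>[p1, p2, p3]. N (x - p))"
    using assms(4) by simp
qed

lemma N_conv: assumes "u \<ge> 0" "v \<ge> 0" "u + v = 1"
  shows "N (u *\<^sub>R a + v *\<^sub>R b - p) \<le> u * N (a - p) + v * N (b - p)"
proof -
  have "u *\<^sub>R a + v *\<^sub>R b - p = u *\<^sub>R (a - p) + v *\<^sub>R (b - p)"
    using assms(3) by (simp add: algebra_simps flip: scaleR_add_left)
  hence "N (u *\<^sub>R a + v *\<^sub>R b - p) \<le> N (u *\<^sub>R (a - p)) + N (v *\<^sub>R (b - p))" using N_tri by simp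
  thus ?thesis using assms by (simp add: N_pscale)
qed

lemma FT_hard:
  assumes FT: "FT_point N 0 [p1, p2, p3]"
  shows "\<exists>w1 w2 w3. nm N w1 p1 \<and> nm N w2 p2 \<and> nm N w3 p3 \<and> w1 + w2 + w3 = 0"
proof -
  define G where "G y1 y2 y3 = N (y1 - p1) - N p1 + (N (y2 - p2) - N p2) + (N (y3 - p3) - N p3)"
    for y1 y2 y3
  have G0: "G x x x \<ge> 0" for x
    using FT unfolding FT_point_def G_def by (simp add: N_sub[of 0]) (smt (verit))
  define S :: "((real^2) \<times> (real^2) \<times> (real^2) \<times> real) set"
    where "S = {(y1, y2, y3, t). G y1 y2 y3 \<le> t}"
  define T :: "((real^2) \<times> (real^2) \<times> (real^2) \<times> real) set"
    where "T = {(x, x, x, t) | x t. t < 0}"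
  have cS: "convex S" unfolding convex_def
  proof (intro ballI allI impI)
    fix X Y and u v :: real assume XS: "X \<in> S" and YS: "Y \<in> S" and uv: "0 \<le> u" "0 \<le> v" "u + v = 1"
    obtain x1 x2 x3 t where X: "X = (x1, x2, x3, t)" by (cases X) auto
    obtain y1 y2 y3 s where Y: "Y = (y1, y2, y3, s)" by (cases Y) auto
    have "G x1 x2 x3 \<le> t" "G y1 y2 y3 \<le> s" using XS YS X Y S_def by auto
    moreover have "G (u *\<^sub>R x1 + v *\<^sub>R y1) (u *\<^sub>R x2 + v *\<^sub>R y2) (u *\<^sub>R x3 + v *\<^sub>R y3)
        \<le> u * G x1 x2 x3 + v * G y1 y2 y3"
      using N_conv[OF uv, of x1 y1 p1] N_conv[OF uv, of x2 y2 p2] N_conv[OF uv, of x3 y3 p3] uv(3)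
    proof -
      have e: "u * N p + v * N p = N p" for p using uv(3) by (metis distrib_right mult_1)
      show ?thesis
        using N_conv[OF uv, of x1 y1 p1] N_conv[OF uv, of x2 y2 p2] N_conv[OF uv, of x3 y3 p3]
          e[of p1] e[of p2] e[of p3]
        unfolding G_def by (simp only: distrib_left right_diff_distrib)
    qed
    ultimately have "G (u *\<^sub>R x1 + v *\<^sub>R y1) (u *\<^sub>R x2 + v *\<^sub>R y2) (u *\<^sub>R x3 + v *\<^sub>R y3)
        \<le> u * t + v * s"
      using uv mult_left_mono[of "G x1 x2 x3" t u] mult_left_mono[of "G y1 y2 y3" s v] by linarith
    thus "u *\<^sub>R X + v *\<^sub>R Y \<in> S" unfolding S_def X Y by simp
  qed
  have cT: "convex T" unfolding convex_def
  proof (intro ballI allI impI)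
    fix X Y and u v :: real assume XS: "X \<in> T" and YS: "Y \<in> T" and uv: "0 \<le> u" "0 \<le> v" "u + v = 1"
    obtain x t where X: "X = (x, x, x, t)" "t < 0" using XS T_def by auto
    obtain y s where Y: "Y = (y, y, y, s)" "s < 0" using YS T_def by auto
    have "u * t + v * s < 0"
    proof (cases "u = 0")
      case True thus ?thesis using uv Y by simp
    next
      case False thus ?thesis using uv X Y
        by (smt (verit) mult_pos_neg mult_nonneg_nonpos)
    qed
    thus "u *\<^sub>R X + v *\<^sub>R Y \<in> T" unfolding T_def X Y by auto
  qed
  have "(0, 0, 0, 0) \<in> S" unfolding S_def G_def by simp
  hence neS: "S \<noteq> {}" by auto
  have "(0, 0, 0, -1) \<in> T" unfolding T_def by auto
  hence neT: "T \<noteq> {}" by auto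
  have dis: "S \<inter> T = {}"
  proof (rule ccontr)
    assume "S \<inter> T \<noteq> {}"
    then obtain x t where "(x, x, x, t) \<in> S" "t < 0" unfolding T_def by auto
    hence "G x x x \<le> t" unfolding S_def by auto
    thus False using G0[of x] \<open>t < 0\<close> by simp
  qed
  obtain a b where ab: "a \<noteq> 0" "\<forall>x\<in>S. inner a x \<le> b" "\<forall>x\<in>T. inner a x \<ge> b"
    using separating_hyperplane_sets[OF cS cT neS neT dis] by blast
  obtain a1 a2 a3 c where a: "a = (a1, a2, a3, c)" by (cases a) auto
  have Sin: "inner a1 y1 + inner a2 y2 + inner a3 y3 + c * G y1 y2 y3 \<le> b" for y1 y2 y3
    using ab(2)[rule_format, of "(y1, y2, y3, G y1 y2 y3)"] unfolding S_def a by (simp add: add.assoc)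
  have Tin: "inner (a1 + a2 + a3) x + c * t \<ge> b" if "t < 0" for x t
    using ab(3)[rule_format, of "(x, x, x, t)"] that unfolding T_def a
    by (auto simp: inner_add_left add.assoc)
  have b0: "b \<ge> 0" using Sin[of 0 0 0] unfolding G_def by simp
  have c0: "c \<le> 0" using Tin[of "-1" 0] b0 by simp
  have A0: "a1 + a2 + a3 = 0"
  proof (rule ccontr)
    assume ne: "a1 + a2 + a3 \<noteq> 0"
    let ?A = "a1 + a2 + a3"
    have "inner ?A ((- (\<bar>c\<bar> + b + 1) / inner ?A ?A) *\<^sub>R ?A) + c * (-1) \<ge> b"
      by (rule Tin) simp
    moreover have "inner ?A ?A > 0" using ne by simp
    ultimately have "- (\<bar>c\<bar> + b + 1) - c \<ge> b" by simp
    thus False using b0 by linarith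
  qed
  have cneg: "c < 0"
  proof (rule ccontr)
    assume "\<not> c < 0" hence c00: "c = 0" using c0 by simp
    have a10: "a1 = 0"
    proof (rule ccontr)
      assume ne: "a1 \<noteq> 0"
      have "inner a1 (((b + 1) / inner a1 a1) *\<^sub>R a1) + inner a2 0 + inner a3 0 + c * G (((b + 1) / inner a1 a1) *\<^sub>R a1) 0 0 \<le> b"
        by (rule Sin)
      moreover have "inner a1 a1 > 0" using ne by simp
      ultimately show False using c00 by simp
    qed
    have a20: "a2 = 0"
    proof (rule ccontr)
      assume ne: "a2 \<noteq> 0"
      have "inner a1 0 + inner a2 (((b + 1) / inner a2 a2) *\<^sub>R a2) + inner a3 0 + c * G 0 (((b + 1) / inner a2 a2) *\<^sub>R a2) 0 \<le> b"
        by (rule Sin)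
      moreover have "inner a2 a2 > 0" using ne by simp
      ultimately show False using c00 by simp
    qed
    have "a3 = 0" using A0 a10 a20 by simp
    thus False using ab(1) a a10 a20 c00 by (simp add: zero_prod_def)
  qed
  define g where "g = - c"
  have gpos: "g > 0" using cneg g_def by simp
  have sub: "N (y - p) - N p \<ge> inner ((1/g) *\<^sub>R ai) y"
    if "inner ai y + c * (N (y - p) - N p) \<le> b" "b \<le> 0" for ai y p
  proof -
    have "inner ai y \<le> g * (N (y - p) - N p)" using that unfolding g_def by (simp add: algebra_simps)
    thus ?thesis using gpos by (simp add: field_simps)
  qed
  have bz: "b \<le> 0"
  proof (rule ccontr)
    assume "\<not> b \<le> 0"
    hence "b > 0" by simp
    have "inner (a1 + a2 + a3) 0 + c * (- b / (2 * g)) \<ge> b" by (rule Tin) (use \<open>b > 0\<close> gpos in simp)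
    thus False using \<open>b > 0\<close> gpos unfolding g_def by (simp add: field_simps)
  qed
  have s1: "N (y - p1) - N p1 \<ge> inner ((1/g) *\<^sub>R a1) y" for y
    using Sin[of y 0 0] by (intro sub[OF _ bz]) (simp add: G_def)
  have s2: "N (y - p2) - N p2 \<ge> inner ((1/g) *\<^sub>R a2) y" for y
    using Sin[of 0 y 0] by (intro sub[OF _ bz]) (simp add: G_def)
  have s3: "N (y - p3) - N p3 \<ge> inner ((1/g) *\<^sub>R a3) y" for y
    using Sin[of 0 0 y] by (intro sub[OF _ bz]) (simp add: G_def)
  have nmsub: "nm N (- v) p" if h: "\<And>y. N (y - p) - N p \<ge> inner v y" for v p
  proof -
    have bnd: "inner (- v) z \<le> N z" for z
    proof -
      have "N (- z - p) - N p \<ge> inner v (- z)" by (rule h)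
      moreover have "N (- z - p) \<le> N z + N p" using N_tri_sub[of "-z" p] by simp
      ultimately show ?thesis by simp
    qed
    have "N (p - p) - N p \<ge> inner v p" by (rule h)
    hence "inner (- v) p \<ge> N p" by simp
    with bnd[of p] show ?thesis unfolding nm_def using bnd by auto
  qed
  have "nm N (- ((1/g) *\<^sub>R a1)) p1" by (rule nmsub[OF s1])
  moreover have "nm N (- ((1/g) *\<^sub>R a2)) p2" by (rule nmsub[OF s2])
  moreover have "nm N (- ((1/g) *\<^sub>R a3)) p3" by (rule nmsub[OF s3])
  moreover have "- ((1/g) *\<^sub>R a1) + - ((1/g) *\<^sub>R a2) + - ((1/g) *\<^sub>R a3) = 0"
  proof -
    have "- ((1/g) *\<^sub>R a1) + - ((1/g) *\<^sub>R a2) + - ((1/g) *\<^sub>R a3) = - ((1/g) *\<^sub>R (a1 + a2 + a3))"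
      by (simp add: scaleR_add_right)
    thus ?thesis using A0 by simp
  qed
  ultimately show ?thesis by blast
qed

lemma nm_dt: assumes "nm N w x" "nm N w' x'" shows "dt w w' * dt x x' \<ge> 0"
proof -
  have a: "\<bar>inner w x'\<bar> \<le> N x'" "\<bar>inner w' x\<bar> \<le> N x"
    using nm_abs[OF assms(1)] nm_abs[OF assms(2)] by auto
  have "inner w x' * inner w' x \<le> \<bar>inner w x'\<bar> * \<bar>inner w' x\<bar>" by (simp add: abs_mult[symmetric])
  also have "\<dots> \<le> N x' * N x" using a by (intro mult_mono) auto
  finally show ?thesis using dt_inner_id[of w w' x x'] nm_eq[OF assms(1)] nm_eq[OF assms(2)]
    by (simp add: mult.commute)
qed

lemma abs_eq_from_prod: fixes p q A B :: real assumes "p * q = A * B" "\<bar>p\<bar> \<le> A" "\<bar>q\<bar> \<le> B" "A > 0" "B > 0"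
  shows "\<bar>p\<bar> = A"
proof (rule ccontr)
  assume "\<bar>p\<bar> \<noteq> A" hence "\<bar>p\<bar> < A" using assms(2) by (simp add: less_le)
  moreover have "\<bar>p\<bar> * \<bar>q\<bar> \<le> \<bar>p\<bar> * B" using assms(3) by (simp add: mult_left_mono)
  ultimately have "\<bar>p\<bar> * \<bar>q\<bar> < A * B"
    using mult_strict_right_mono[of "\<bar>p\<bar>" A B] assms(5) by linarith
  thus False using assms(1) by (simp add: abs_mult[symmetric])
qed

lemma ZS: assumes "nm N w1 a1" "nm N w2 a2" "nm N w3 a3" "a1 \<noteq> 0" "a2 \<noteq> 0" "a3 \<noteq> 0"
  "w1 + w2 + w3 = 0" shows "dt w1 w2 \<noteq> 0"
proof
  assume d0: "dt w1 w2 = 0"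
  have d31: "dt w3 w1 = 0" using triple_orient(2)[OF assms(7)] d0 by simp
  have p1: "inner w2 a1 * inner w1 a2 = N a1 * N a2"
    using dt_inner_id[of w1 w2 a1 a2] d0 nm_eq[OF assms(1)] nm_eq[OF assms(2)] by (simp add: mult.commute)
  have p2: "inner w3 a1 * inner w1 a3 = N a1 * N a3"
    using dt_inner_id[of w1 w3 a1 a3] d31 dt_swap[of w3 w1] nm_eq[OF assms(1)] nm_eq[OF assms(3)]
    by (simp add: mult.commute)
  have pos: "N a1 > 0" "N a2 > 0" "N a3 > 0" using assms(4-6) N_pos by auto
  have e2: "\<bar>inner w2 a1\<bar> = N a1"
    by (rule abs_eq_from_prod[OF p1 nm_abs[OF assms(2)] nm_abs[OF assms(1)] pos(1,2)])
  have e3: "\<bar>inner w3 a1\<bar> = N a1"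
    by (rule abs_eq_from_prod[OF p2 nm_abs[OF assms(3)] nm_abs[OF assms(1)] pos(1,3)])
  have "inner (w1 + w2 + w3) a1 = 0" using assms(7) by simp
  hence "N a1 + inner w2 a1 + inner w3 a1 = 0" using nm_eq[OF assms(1)] by (simp add: inner_add_left)
  thus False using e2 e3 pos(1) by (auto simp: abs_if split: if_splits)
qed

lemma cone_id: assumes "nm N w1 y1" "nm N w2 y2" "y1 = \<alpha> *\<^sub>R d + \<beta> *\<^sub>R y2"
  shows "\<alpha> * inner (w1 - w2) d = (N y1 - inner w2 y1) + \<beta> * (N y2 - inner w1 y2)"
proof -
  have "\<alpha> * inner (w1 - w2) d = inner w1 (\<alpha> *\<^sub>R d) - inner w2 (\<alpha> *\<^sub>R d)"
    by (simp add: inner_diff_left algebra_simps)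
  also have "\<alpha> *\<^sub>R d = y1 - \<beta> *\<^sub>R y2" using assms(3) by simp
  finally show ?thesis using nm_eq[OF assms(1)] nm_eq[OF assms(2)]
    by (simp add: inner_diff_right algebra_simps)
qed

lemma SF:
  assumes "nm N p0 a" "nm N k0 a" "p0 + p1 + p2 = 0" "k0 + k1 + k2 = 0"
    "nm N p1 y1" "nm N p2 z1" "nm N k1 y2" "nm N k2 z2"
    "betw (- a) y1 y2" "betw (- a) z1 z2"
  shows "nm N k1 y1 \<and> nm N k2 z1"
proof -
  obtain \<alpha> \<beta> where ab: "\<alpha> > 0" "\<beta> \<ge> 0" "y1 = \<alpha> *\<^sub>R (- a) + \<beta> *\<^sub>R y2" using assms(9) betw_def by blast
  obtain \<alpha>' \<beta>' where ab': "\<alpha>' > 0" "\<beta>' \<ge> 0" "z1 = \<alpha>' *\<^sub>R (- a) + \<beta>' *\<^sub>R z2" using assms(10) betw_def by blast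
  have c1: "\<alpha> * inner (p1 - k1) (- a) = (N y1 - inner k1 y1) + \<beta> * (N y2 - inner p1 y2)"
    by (rule cone_id[OF assms(5) assms(7) ab(3)])
  have c2: "\<alpha>' * inner (p2 - k2) (- a) = (N z1 - inner k2 z1) + \<beta>' * (N z2 - inner p2 z2)"
    by (rule cone_id[OF assms(6) assms(8) ab'(3)])
  have n1: "N y1 - inner k1 y1 \<ge> 0" "N y2 - inner p1 y2 \<ge> 0" "N z1 - inner k2 z1 \<ge> 0" "N z2 - inner p2 z2 \<ge> 0"
    using nm_bound[OF assms(7)] nm_bound[OF assms(5)] nm_bound[OF assms(8)] nm_bound[OF assms(6)] by auto
  have s1: "inner (p1 + p2) (- a) = N a"
  proof -
    have "- p0 = p1 + p2" using assms(3) by (subst neg_eq_iff_add_eq_0) (simp add: add.assoc)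
    hence "p1 + p2 = - p0" by simp
    thus ?thesis using nm_eq[OF assms(1)] by simp
  qed
  have s2: "inner (k1 + k2) (- a) = N a"
  proof -
    have "- k0 = k1 + k2" using assms(4) by (subst neg_eq_iff_add_eq_0) (simp add: add.assoc)
    hence "k1 + k2 = - k0" by simp
    thus ?thesis using nm_eq[OF assms(2)] by simp
  qed
  have sum0: "inner (p1 - k1) (- a) + inner (p2 - k2) (- a) = 0"
    using s1 s2 by (simp add: inner_diff_left inner_add_left)
  have g1: "inner (p1 - k1) (- a) \<ge> 0"
  proof -
    have "\<alpha> * inner (p1 - k1) (- a) \<ge> 0" using c1 n1 ab(2) by simp
    thus ?thesis using ab(1) mult_pos_neg[of \<alpha> "inner (p1 - k1) (- a)"] by linarith
  qed
  have g2: "inner (p2 - k2) (- a) \<ge> 0"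
  proof -
    have "\<alpha>' * inner (p2 - k2) (- a) \<ge> 0" using c2 n1 ab'(2) by simp
    thus ?thesis using ab'(1) mult_pos_neg[of \<alpha>' "inner (p2 - k2) (- a)"] by linarith
  qed
  have z: "inner (p1 - k1) (- a) = 0" "inner (p2 - k2) (- a) = 0" using sum0 g1 g2 by auto
  have z2: "\<alpha> * inner (p1 - k1) (- a) = 0" "\<alpha>' * inner (p2 - k2) (- a) = 0" using z by simp_all
  have "\<beta> * (N y2 - inner p1 y2) \<ge> 0" "\<beta>' * (N z2 - inner p2 z2) \<ge> 0"
    using n1 ab(2) ab'(2) by simp_all
  hence "N y1 - inner k1 y1 = 0" "N z1 - inner k2 z1 = 0"
    using c1 c2 n1 z2 by linarith+
  thus ?thesis using assms(7,8) unfolding nm_def by auto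
qed

lemma par_lemma: assumes "nm N w y" "y \<noteq> 0" "D *\<^sub>R y = s *\<^sub>R z" "D > 0" "s \<ge> 0"
  shows "nm N w z"
proof -
  have "s \<noteq> 0" using assms(2,3,4) by auto
  hence sp: "s > 0" using assms(5) by simp
  have "y = (s / D) *\<^sub>R z"
  proof -
    have "y = (1/D) *\<^sub>R (D *\<^sub>R y)" using assms(4) by simp
    also have "\<dots> = (s / D) *\<^sub>R z" using assms(3) by simp
    finally show ?thesis .
  qed
  thus ?thesis using nm_scale[OF assms(1), of "s / D" z] sp assms(4) by simp
qed

lemma crit_dual_sym: "crit_dual N x y \<Longrightarrow> crit_dual N y x"
  unfolding crit_dual_def by (metis add.commute)

lemma ZS3_I: "nm N w1 x \<Longrightarrow> nm N w2 y \<Longrightarrow> nm N w3 z \<Longrightarrow> w1 + w2 + w3 = 0 \<Longrightarrow> ZS3 N x y z"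
  unfolding ZS3_def by blast

lemma core_N1:
  assumes nz: "a1 \<noteq> 0" "a2 \<noteq> 0" "a3 \<noteq> 0"
    and d: "dt a1 a2 > 0" "dt a2 a3 > 0" "dt a3 a1 > 0"
    and c12: "crit_dual N a1 a2" and c13: "crit_dual N a1 a3" and c23: "crit_dual N a2 a3"
  shows "ZS3 N a1 a2 a3"
proof -
  obtain p1 p2 z b where T3: "nm N p1 a1" "nm N p2 a2" "nm N z b" "b \<noteq> 0" "p1 + p2 + z = 0"
    using c12 unfolding crit_dual_def by blast
  obtain q1 q3 u c where T2: "nm N q1 a1" "nm N q3 a3" "nm N u c" "c \<noteq> 0" "q1 + q3 + u = 0"
    using c13 unfolding crit_dual_def by blast
  obtain r2 r3 u' e where T1: "nm N r2 a2" "nm N r3 a3" "nm N u' e" "e \<noteq> 0" "r2 + r3 + u' = 0"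
    using c23 unfolding crit_dual_def by blast
  have d3: "dt p1 p2 \<noteq> 0" by (rule ZS[OF T3(1,2,3) nz(1,2) T3(4) T3(5)])
  have "dt p1 p2 * dt a1 a2 \<ge> 0" by (rule nm_dt[OF T3(1,2)])
  hence d3p: "dt p1 p2 > 0" by (rule pos_from2[OF d3 _ d(1)])
  have "dt p2 z * dt a2 b \<ge> 0" by (rule nm_dt[OF T3(2,3)])
  hence "dt p1 p2 * dt a2 b \<ge> 0" using triple_orient(1)[OF T3(5)] by simp
  hence b1: "dt a2 b \<ge> 0" by (rule pos_from[OF d3p])
  have "dt z p1 * dt b a1 \<ge> 0" by (rule nm_dt[OF T3(3,1)])
  hence "dt p1 p2 * dt b a1 \<ge> 0" using triple_orient(2)[OF T3(5)] by simp
  hence b2: "dt b a1 \<ge> 0" by (rule pos_from[OF d3p])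
  have s2: "q3 + q1 + u = 0" using T2(5) by (simp add: ac_simps)
  have d2: "dt q3 q1 \<noteq> 0" by (rule ZS[OF T2(2,1,3) nz(3,1) T2(4) s2])
  have "dt q3 q1 * dt a3 a1 \<ge> 0" by (rule nm_dt[OF T2(2,1)])
  hence d2p: "dt q3 q1 > 0" by (rule pos_from2[OF d2 _ d(3)])
  have "dt q1 u * dt a1 c \<ge> 0" by (rule nm_dt[OF T2(1,3)])
  hence "dt q3 q1 * dt a1 c \<ge> 0" using triple_orient(1)[OF s2] by simp
  hence c1: "dt a1 c \<ge> 0" by (rule pos_from[OF d2p])
  have "dt u q3 * dt c a3 \<ge> 0" by (rule nm_dt[OF T2(3,2)])
  hence "dt q3 q1 * dt c a3 \<ge> 0" using triple_orient(2)[OF s2] by simp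
  hence c2: "dt c a3 \<ge> 0" by (rule pos_from[OF d2p])
  have d1: "dt r2 r3 \<noteq> 0" by (rule ZS[OF T1(1,2,3) nz(2,3) T1(4) T1(5)])
  have "dt r2 r3 * dt a2 a3 \<ge> 0" by (rule nm_dt[OF T1(1,2)])
  hence d1p: "dt r2 r3 > 0" by (rule pos_from2[OF d1 _ d(2)])
  have "dt r3 u' * dt a3 e \<ge> 0" by (rule nm_dt[OF T1(2,3)])
  hence "dt r2 r3 * dt a3 e \<ge> 0" using triple_orient(1)[OF T1(5)] by simp
  hence e1: "dt a3 e \<ge> 0" by (rule pos_from[OF d1p])
  have "dt u' r2 * dt e a2 \<ge> 0" by (rule nm_dt[OF T1(3,1)])
  hence "dt r2 r3 * dt e a2 \<ge> 0" using triple_orient(2)[OF T1(5)] by simp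
  hence e2: "dt e a2 \<ge> 0" by (rule pos_from[OF d1p])
  have solT3: "ZS3 N a1 a2 a3" if "nm N z a3" using ZS3_I[OF T3(1,2) that T3(5)] .
  have solT2: "ZS3 N a1 a2 a3" if "nm N u a2" using ZS3_I[OF T2(1) that T2(2)] T2(5) by (simp add: ac_simps)
  have solT1: "ZS3 N a1 a2 a3" if "nm N u' a1" using ZS3_I[OF that T1(1,2)] T1(5) by (simp add: ac_simps)
  have Zb: "ZS3 N a1 a2 a3" if "dt a3 b = 0"
  proof -
    have "dt a2 a3 *\<^sub>R b = dt b a3 *\<^sub>R a2 + dt a2 b *\<^sub>R a3" by (rule vec_id)
    hence "dt a2 a3 *\<^sub>R b = dt a2 b *\<^sub>R a3" using that dt_swap[of b a3] by simp
    thus ?thesis using solT3 par_lemma[OF T3(3) T3(4) _ d(2) b1] by blast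
  qed
  have Zc: "ZS3 N a1 a2 a3" if "dt a2 c = 0"
  proof -
    have "dt a1 a2 *\<^sub>R c = dt c a2 *\<^sub>R a1 + dt a1 c *\<^sub>R a2" by (rule vec_id)
    hence "dt a1 a2 *\<^sub>R c = dt a1 c *\<^sub>R a2" using that dt_swap[of c a2] by simp
    thus ?thesis using solT2 par_lemma[OF T2(3) T2(4) _ d(1) c1] by blast
  qed
  have Ze: "ZS3 N a1 a2 a3" if "dt a1 e = 0"
  proof -
    have "dt a3 a1 *\<^sub>R e = dt e a1 *\<^sub>R a3 + dt a3 e *\<^sub>R a1" by (rule vec_id)
    hence "dt a3 a1 *\<^sub>R e = dt a3 e *\<^sub>R a1" using that dt_swap[of e a1] by simp
    thus ?thesis using solT1 par_lemma[OF T1(3) T1(4) _ d(3) e1] by blast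
  qed
  have PL1: "dt a1 e * dt a2 a3 - dt a1 a2 * dt e a3 + dt a1 a3 * dt e a2 = 0" by (rule plucker)
  have PL2: "dt a3 b * dt a1 a2 - dt a3 a1 * dt b a2 + dt a3 a2 * dt b a1 = 0" by (rule plucker)
  have PL3: "dt a2 c * dt a3 a1 - dt a2 a3 * dt c a1 + dt a2 a1 * dt c a3 = 0" by (rule plucker)
  have sw: "dt e a3 = - dt a3 e" "dt a1 a3 = - dt a3 a1" "dt b a2 = - dt a2 b" "dt a3 a2 = - dt a2 a3"
    "dt c a1 = - dt a1 c" "dt a2 a1 = - dt a1 a2" "dt b a3 = - dt a3 b" "dt c a2 = - dt a2 c"
    "dt e a1 = - dt a1 e" "dt a2 e = - dt e a2" "dt a1 b = - dt b a1" "dt a3 c = - dt c a3"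
    by (fact dt_swap)+
  show ?thesis
  proof (cases "dt a3 b = 0 \<or> dt a2 c = 0 \<or> dt a1 e = 0")
    case True thus ?thesis using Zb Zc Ze by blast
  next
    case False
    hence nb: "dt a3 b \<noteq> 0" and nc: "dt a2 c \<noteq> 0" and ne: "dt a1 e \<noteq> 0" by auto
    consider "dt a1 e > 0" "dt a3 b > 0" | "dt a1 e < 0" "dt a3 b < 0"
      | "dt a2 c > 0" "dt a3 b > 0" | "dt a2 c < 0" "dt a3 b < 0"
      | "dt a1 e > 0" "dt a2 c > 0" | "dt a1 e < 0" "dt a2 c < 0"
    proof -
      have o1: "dt a1 e > 0 \<or> dt a1 e < 0" using ne by linarith
      have o2: "dt a3 b > 0 \<or> dt a3 b < 0" using nb by linarith
      have o3: "dt a2 c > 0 \<or> dt a2 c < 0" using nc by linarith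
      show ?thesis using o1 o2 o3 that by blast
    qed
    thus ?thesis
    proof cases
      case 1
      have "dt e a2 > 0"
      proof (rule ccontr)
        assume "\<not> dt e a2 > 0" hence z0: "dt e a2 = 0" using e2 by simp
        have "dt a1 e * dt a2 a3 > 0" using 1 d by simp
        moreover have "dt a1 a2 * dt a3 e \<ge> 0" using d e1 by simp
        ultimately show False using PL1 z0 sw by (simp; linarith)
      qed
      hence bt1: "betw (- a2) a1 e" using 1 d sw by (intro betw_pos) auto
      have bt2: "betw (- a2) b a3" using 1 d b1 sw by (intro betw_neg) auto
      have sm1: "p2 + p1 + z = 0" using T3(5) by (simp add: ac_simps)
      have sm2: "r2 + u' + r3 = 0" using T1(5) by (simp add: ac_simps)
      have "nm N u' a1 \<and> nm N r3 b"
        using SF[OF T3(2) T1(1) sm1 sm2 T3(1) T3(3) T1(3) T1(2)] bt1 bt2 by blast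
      thus ?thesis using solT1 by blast
    next
      case 2
      have "dt a2 b > 0"
      proof (rule ccontr)
        assume "\<not> dt a2 b > 0" hence z0: "dt a2 b = 0" using b1 by simp
        have "dt a3 b * dt a1 a2 < 0" using 2 d by (simp add: mult_neg_pos)
        moreover have "dt a2 a3 * dt b a1 \<ge> 0" using d b2 by simp
        ultimately show False using PL2 z0 sw by (simp; linarith)
      qed
      hence bt1: "betw (- a2) a3 b" using 2 d sw by (intro betw_neg) auto
      have bt2: "betw (- a2) e a1" using 2 d e2 sw by (intro betw_pos) auto
      have sm1: "r2 + u' + r3 = 0" using T1(5) by (simp add: ac_simps)
      have sm2: "p2 + p1 + z = 0" using T3(5) by (simp add: ac_simps)
      have "nm N p1 e \<and> nm N z a3"
        using SF[OF T1(1) T3(2) sm1 sm2 T1(3) T1(2) T3(1) T3(3)] bt1 bt2 by blast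
      thus ?thesis using solT3 by blast
    next
      case 3
      have "dt b a1 > 0"
      proof (rule ccontr)
        assume "\<not> dt b a1 > 0" hence z0: "dt b a1 = 0" using b2 by simp
        have "dt a3 b * dt a1 a2 > 0" using 3 d by simp
        moreover have "dt a3 a1 * dt a2 b \<ge> 0" using d b1 by simp
        ultimately show False using PL2 z0 sw by (simp; linarith)
      qed
      hence bt1: "betw (- a1) a3 b" using 3 d sw by (intro betw_pos) auto
      have bt2: "betw (- a1) c a2" using 3 d c1 sw by (intro betw_neg) auto
      have sm1: "q1 + u + q3 = 0" using T2(5) by (simp add: ac_simps)
      have sm2: "p1 + p2 + z = 0" using T3(5) by (simp add: ac_simps)
      have "nm N p2 c \<and> nm N z a3"
        using SF[OF T2(1) T3(1) sm1 sm2 T2(3) T2(2) T3(2) T3(3)] bt1 bt2 by blast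
      thus ?thesis using solT3 by blast
    next
      case 4
      have "dt a1 c > 0"
      proof (rule ccontr)
        assume "\<not> dt a1 c > 0" hence z0: "dt a1 c = 0" using c1 by simp
        have "dt a2 c * dt a3 a1 < 0" using 4 d by (simp add: mult_neg_pos)
        moreover have "dt a1 a2 * dt c a3 \<ge> 0" using d c2 by simp
        ultimately show False using PL3 z0 sw by (simp; linarith)
      qed
      hence bt1: "betw (- a1) a2 c" using 4 d sw by (intro betw_neg) auto
      have bt2: "betw (- a1) b a3" using 4 d b2 sw by (intro betw_pos) auto
      have sm1: "p1 + p2 + z = 0" using T3(5) by (simp add: ac_simps)
      have sm2: "q1 + u + q3 = 0" using T2(5) by (simp add: ac_simps)
      have "nm N u a2 \<and> nm N q3 b"
        using SF[OF T3(1) T2(1) sm1 sm2 T3(2) T3(3) T2(3) T2(2)] bt1 bt2 by blast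
      thus ?thesis using solT2 by blast
    next
      case 5
      have "dt c a3 > 0"
      proof (rule ccontr)
        assume "\<not> dt c a3 > 0" hence z0: "dt c a3 = 0" using c2 by simp
        have "dt a2 c * dt a3 a1 > 0" using 5 d by simp
        moreover have "dt a2 a3 * dt a1 c \<ge> 0" using d c1 by simp
        ultimately show False using PL3 z0 sw by (simp; linarith)
      qed
      hence bt1: "betw (- a3) a2 c" using 5 d sw by (intro betw_pos) auto
      have bt2: "betw (- a3) e a1" using 5 d e1 sw by (intro betw_neg) auto
      have sm1: "r3 + u' + r2 = 0" using T1(5) by (simp add: ac_simps)
      have sm2: "q3 + q1 + u = 0" using T2(5) by (simp add: ac_simps)
      have "nm N q1 e \<and> nm N u a2"
        using SF[OF T1(2) T2(2) sm1 sm2 T1(3) T1(1) T2(1) T2(3)] bt1 bt2 by blast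
      thus ?thesis using solT2 by blast
    next
      case 6
      have "dt a3 e > 0"
      proof (rule ccontr)
        assume "\<not> dt a3 e > 0" hence z0: "dt a3 e = 0" using e1 by simp
        have "dt a1 e * dt a2 a3 < 0" using 6 d by (simp add: mult_neg_pos)
        moreover have "dt a3 a1 * dt e a2 \<ge> 0" using d e2 by simp
        ultimately show False using PL1 z0 sw by (simp; linarith)
      qed
      hence bt1: "betw (- a3) a1 e" using 6 d sw by (intro betw_neg) auto
      have bt2: "betw (- a3) c a2" using 6 d c2 sw by (intro betw_pos) auto
      have sm1: "q3 + q1 + u = 0" using T2(5) by (simp add: ac_simps)
      have sm2: "r3 + u' + r2 = 0" using T1(5) by (simp add: ac_simps)
      have "nm N u' a1 \<and> nm N r2 c"
        using SF[OF T2(2) T1(2) sm1 sm2 T2(1) T2(3) T1(3) T1(1)] bt1 bt2 by blast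
      thus ?thesis using solT1 by blast
    qed
  qed
qed

lemma nm_neg: assumes "nm N w x" shows "nm N (- w) (- x)"
proof -
  have "inner (- w) v \<le> N v" for v using nm_bound[OF assms, of "- v"] by simp
  thus ?thesis using nm_eq[OF assms] unfolding nm_def by simp
qed

lemma notcrit_same: assumes "crit_dual N x y" "x \<noteq> 0" "y = s *\<^sub>R x" "s > 0" shows False
proof -
  obtain w v z c where h: "nm N w x" "nm N v y" "nm N z c" "c \<noteq> 0" "w + v + z = 0"
    using assms(1) unfolding crit_dual_def by blast
  have vx: "nm N v x" by (rule nm_scale[OF h(2) assms(3,4)])
  have "- z = w + v" using h(5) by (subst neg_eq_iff_add_eq_0) (simp add: ac_simps)
  hence "inner z (- x) = N x + N x" using nm_eq[OF h(1)] nm_eq[OF vx]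
    by (metis inner_add_left inner_minus_left inner_minus_right)
  moreover have "inner z (- x) \<le> N x" using nm_bound[OF h(3), of "- x"] by simp
  ultimately have "N x \<le> 0" by simp
  thus False using N_pos[OF assms(2)] by simp
qed

lemma core_N2:
  assumes nz: "a1 \<noteq> 0" "a2 \<noteq> 0" "a3 \<noteq> 0"
    and op: "a2 = (- t) *\<^sub>R a1" "t > 0" and d: "dt a3 a1 > 0"
    and c12: "crit_dual N a1 a2" and c13: "crit_dual N a1 a3" and c23: "crit_dual N a2 a3"
  shows "ZS3 N a1 a2 a3"
proof -
  obtain p1 p2 z b where T3: "nm N p1 a1" "nm N p2 a2" "nm N z b" "b \<noteq> 0" "p1 + p2 + z = 0"
    using c12 unfolding crit_dual_def by blast
  obtain q1 q3 u c where T2: "nm N q1 a1" "nm N q3 a3" "nm N u c" "c \<noteq> 0" "q1 + q3 + u = 0"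
    using c13 unfolding crit_dual_def by blast
  obtain r2 r3 u' e where T1: "nm N r2 a2" "nm N r3 a3" "nm N u' e" "e \<noteq> 0" "r2 + r3 + u' = 0"
    using c23 unfolding crit_dual_def by blast
  have ma2: "- a2 = t *\<^sub>R a1" using op by simp
  have ma1: "- a1 = (1 / t) *\<^sub>R a2" using op by simp
  have Na2: "N a2 = t * N a1" using op N_scale[of "- t" a1] by simp
  have p2a1: "inner p2 a1 = - N a1"
  proof -
    have "inner p2 a2 = - t * inner p2 a1" using op by simp
    hence "t * (inner p2 a1 + N a1) = 0" using nm_eq[OF T3(2)] Na2 by (simp add: algebra_simps)
    thus ?thesis using op(2) by simp
  qed
  have za1: "inner z a1 = 0"
  proof -
    have "- z = p1 + p2" using T3(5) by (subst neg_eq_iff_add_eq_0) (simp add: ac_simps)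
    hence "inner z a1 = - (inner p1 a1 + inner p2 a1)"
      by (metis inner_add_left inner_minus_left minus_minus)
    thus ?thesis using nm_eq[OF T3(1)] p2a1 by simp
  qed
  have dba: "dt b a1 \<noteq> 0"
  proof
    assume "dt b a1 = 0"
    hence "b = (inner b a1 / inner a1 a1) *\<^sub>R a1" by (rule par_decomp[OF _ nz(1)])
    hence "inner z b = 0" using za1 by (metis inner_scaleR_right mult_zero_right)
    hence "N b = 0" using nm_eq[OF T3(3)] by simp
    thus False using T3(4) N_eq0 by simp
  qed
  obtain P1 P2 Z B where TT: "nm N P1 a1" "nm N P2 a2" "nm N Z B" "B \<noteq> 0" "P1 + P2 + Z = 0"
    "dt B a1 > 0"
  proof (cases "dt b a1 > 0")
    case True thus ?thesis using that T3 by blast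
  next
    case False
    hence neg: "dt (- b) a1 > 0" using dba by simp
    have "nm N (- p2) a1" using nm_scale[OF nm_neg[OF T3(2)] ma2 op(2)] .
    moreover have "nm N (- p1) a2" using nm_scale[OF nm_neg[OF T3(1)] ma1] op(2) by simp
    moreover have "nm N (- z) (- b)" by (rule nm_neg[OF T3(3)])
    moreover have "- b \<noteq> 0" using T3(4) by simp
    moreover have "- p2 + - p1 + - z = 0"
    proof -
      have "- p2 + - p1 + - z = - (p1 + p2 + z)" by (simp add: algebra_simps)
      thus ?thesis using T3(5) by simp
    qed
    ultimately show ?thesis using that neg by blast
  qed
  have sw: "dt B a3 = - dt a3 B" "dt a1 a3 = - dt a3 a1" "dt a1 B = - dt B a1" by (fact dt_swap)+
  consider "dt a3 B = 0" | "dt a3 B > 0" | "dt a3 B < 0" by linarith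
  thus ?thesis
  proof cases
    case 1
    have "dt a3 a1 *\<^sub>R B = dt B a1 *\<^sub>R a3 + dt a3 B *\<^sub>R a1" by (rule vec_id)
    hence "dt a3 a1 *\<^sub>R B = dt B a1 *\<^sub>R a3" using 1 by simp
    hence "nm N Z a3" by (rule par_lemma[OF TT(3) TT(4) _ d]) (use TT(6) in simp)
    thus ?thesis using ZS3_I[OF TT(1,2) _ TT(5)] by blast
  next
    case 2
    have bt1: "betw (- a2) a1 e"
      unfolding betw_def using op(2) ma2 by (intro exI[of _ "1/t"] exI[of _ 0]) simp
    have bt2: "betw (- a2) B a3"
      using 2 d TT(6) op(2) sw unfolding ma2 by (intro betw_neg) (auto simp: mult_pos_neg)
    have sm1: "P2 + P1 + Z = 0" using TT(5) by (simp add: ac_simps)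
    have sm2: "r2 + u' + r3 = 0" using T1(5) by (simp add: ac_simps)
    have "nm N u' a1 \<and> nm N r3 B"
      using SF[OF TT(2) T1(1) sm1 sm2 TT(1) TT(3) T1(3) T1(2)] bt1 bt2 by blast
    moreover have "u' + r2 + r3 = 0" using T1(5) by (simp add: ac_simps)
    ultimately show ?thesis using ZS3_I[OF _ T1(1,2)] by blast
  next
    case 3
    have bt1: "betw (- a1) a2 c"
      unfolding betw_def using op by (intro exI[of _ t] exI[of _ 0]) simp
    have bt2: "betw (- a1) B a3"
      using 3 d TT(6) sw by (intro betw_pos) auto
    have sm1: "P1 + P2 + Z = 0" using TT(5) by simp
    have sm2: "q1 + u + q3 = 0" using T2(5) by (simp add: ac_simps)
    have "nm N u a2 \<and> nm N q3 B"
      using SF[OF TT(1) T2(1) sm1 sm2 TT(2) TT(3) T2(3) T2(2)] bt1 bt2 by blast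
    moreover have "q1 + u + q3 = 0" using T2(5) by (simp add: ac_simps)
    ultimately show ?thesis using ZS3_I[OF T2(1) _ T2(2)] by blast
  qed
qed

lemma ZS3_12: assumes "ZS3 N x y z" shows "ZS3 N y x z"
proof -
  obtain w1 w2 w3 where h: "nm N w1 x" "nm N w2 y" "nm N w3 z" "w1 + w2 + w3 = 0"
    using assms unfolding ZS3_def by blast
  have "w2 + w1 + w3 = 0" using h(4) by (simp add: ac_simps)
  thus ?thesis using ZS3_I[OF h(2) h(1) h(3)] by blast
qed

lemma ZS3_23: assumes "ZS3 N x y z" shows "ZS3 N x z y"
proof -
  obtain w1 w2 w3 where h: "nm N w1 x" "nm N w2 y" "nm N w3 z" "w1 + w2 + w3 = 0"
    using assms unfolding ZS3_def by blast
  have "w1 + w3 + w2 = 0" using h(4) by (simp add: ac_simps)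
  thus ?thesis using ZS3_I[OF h(1) h(3) h(2)] by blast
qed

lemma N2gen: assumes nz: "x \<noteq> 0" "y \<noteq> 0" "z \<noteq> 0" and op: "opp x y"
  and c: "crit_dual N x y" "crit_dual N x z" "crit_dual N y z"
  shows "ZS3 N x y z"
proof -
  obtain t where t: "t > 0" "y = (- t) *\<^sub>R x" using op unfolding opp_def by blast
  consider "dt z x > 0" | "dt z x < 0" | "dt z x = 0" by linarith
  thus ?thesis
  proof cases
    case 1 thus ?thesis by (rule core_N2[OF nz t(2) t(1) _ c])
  next
    case 2
    have "dt z y > 0" using 2 t by (simp add: mult_pos_neg)
    moreover have "x = (- (1 / t)) *\<^sub>R y" using t by simp
    moreover have "1 / t > 0" using t by simp
    ultimately have "ZS3 N y x z"
      using core_N2[OF nz(2,1,3), of "1 / t"] crit_dual_sym[OF c(1)] c(3) c(2) by blast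
    thus ?thesis by (rule ZS3_12)
  next
    case 3
    obtain s where s: "s \<noteq> 0" "z = s *\<^sub>R x" using par_sign[OF 3 nz(1,3)] by blast
    show ?thesis
    proof (cases "s > 0")
      case True thus ?thesis using notcrit_same[OF c(2) nz(1) s(2)] by blast
    next
      case False
      hence "- s > 0" using s(1) by simp
      hence sn: "- s / t > 0" using t(1) by (rule divide_pos_pos)
      have "z = (- s / t) *\<^sub>R y" using s(2) t by simp
      thus ?thesis using notcrit_same[OF c(3) nz(2) _ sn] by blast
    qed
  qed
qed

lemma ZS_notpointed: assumes nz: "a1 \<noteq> 0" "a2 \<noteq> 0" "a3 \<noteq> 0" and Z: "ZS3 N a1 a2 a3"
  shows "\<not> pointed3 a1 a2 a3"
proof
  assume "pointed3 a1 a2 a3"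
  then obtain u where u: "inner u a1 > 0" "inner u a2 > 0" "inner u a3 > 0" unfolding pointed3_def by blast
  obtain w1 w2 w3 where h: "nm N w1 a1" "nm N w2 a2" "nm N w3 a3" "w1 + w2 + w3 = 0"
    using Z unfolding ZS3_def by blast
  have dn: "dt w1 w2 \<noteq> 0" by (rule ZS[OF h(1-3) nz h(4)])
  have h12: "dt w1 w2 * dt a1 a2 \<ge> 0" by (rule nm_dt[OF h(1,2)])
  have "dt w2 w3 * dt a2 a3 \<ge> 0" by (rule nm_dt[OF h(2,3)])
  hence h23: "dt w1 w2 * dt a2 a3 \<ge> 0" using triple_orient(1)[OF h(4)] by simp
  have "dt w3 w1 * dt a3 a1 \<ge> 0" by (rule nm_dt[OF h(3,1)])
  hence h31: "dt w1 w2 * dt a3 a1 \<ge> 0" using triple_orient(2)[OF h(4)] by simp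
  have sw: "dt a3 a2 = - dt a2 a3" "dt a1 a3 = - dt a3 a1" by (fact dt_swap)+
  have I3: "dt a1 a2 *\<^sub>R a3 = (- dt a2 a3) *\<^sub>R a1 + (- dt a3 a1) *\<^sub>R a2"
    using vec_id[of a1 a2 a3] unfolding sw .
  hence "inner u (dt a1 a2 *\<^sub>R a3) = inner u ((- dt a2 a3) *\<^sub>R a1 + (- dt a3 a1) *\<^sub>R a2)" by simp
  hence "dt a1 a2 * inner u a3 + dt a2 a3 * inner u a1 + dt a3 a1 * inner u a2 = 0"
    by (simp add: inner_add_right inner_diff_right)
  hence "dt w1 w2 * (dt a1 a2 * inner u a3 + dt a2 a3 * inner u a1 + dt a3 a1 * inner u a2) = 0" by simp
  hence E: "(dt w1 w2 * dt a1 a2) * inner u a3 + (dt w1 w2 * dt a2 a3) * inner u a1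
      + (dt w1 w2 * dt a3 a1) * inner u a2 = 0" by (simp add: algebra_simps)
  have p1: "(dt w1 w2 * dt a1 a2) * inner u a3 \<ge> 0" using h12 u by simp
  have p2: "(dt w1 w2 * dt a2 a3) * inner u a1 \<ge> 0" using h23 u by simp
  have p3: "(dt w1 w2 * dt a3 a1) * inner u a2 \<ge> 0" using h31 u by simp
  have "(dt w1 w2 * dt a1 a2) * inner u a3 = 0" "(dt w1 w2 * dt a3 a1) * inner u a2 = 0"
    using E p1 p2 p3 by linarith+
  hence d0: "dt a1 a2 = 0" "dt a3 a1 = 0" using u dn by auto
  have "dt a2 a1 = 0" using d0 dt_swap[of a2 a1] by simp
  then obtain s where s: "s \<noteq> 0" "a2 = s *\<^sub>R a1" using par_sign nz by blast
  have "s > 0" using u(1,2) s(2) by (simp add: zero_less_mult_iff)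
  hence n2: "nm N w2 a1" using nm_scale[OF h(2) s(2)] by blast
  obtain s' where s': "s' \<noteq> 0" "a3 = s' *\<^sub>R a1" using par_sign[OF d0(2) nz(1,3)] by blast
  have "s' > 0" using u(1,3) s'(2) by (simp add: zero_less_mult_iff)
  hence n3: "nm N w3 a1" using nm_scale[OF h(3) s'(2)] by blast
  have "inner (w1 + w2 + w3) a1 = N a1 + N a1 + N a1"
    using nm_eq[OF h(1)] nm_eq[OF n2] nm_eq[OF n3] by (simp add: inner_add_left)
  thus False using h(4) N_pos[OF nz(1)] by simp
qed

lemma FT_perm: "FT_point N 0 [x, y, z] \<Longrightarrow> FT_point N 0 [y, x, z]"
  "FT_point N 0 [x, y, z] \<Longrightarrow> FT_point N 0 [x, z, y]"
  unfolding FT_point_def by (simp_all add: ac_simps)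

lemma crit_of_FT: assumes "FT_point N 0 [x, y, z]" "z \<noteq> 0" shows "critical_angle N x 0 y"
  unfolding critical_angle_def using assms by blast

lemma cd_of_crit: assumes "critical_angle N x 0 y" shows "crit_dual N x y"
proof -
  obtain x3 where "x3 \<noteq> 0" "FT_point N 0 [x, y, x3]" using assms unfolding critical_angle_def by blast
  thus ?thesis using FT_hard unfolding crit_dual_def by blast
qed

end


theorem theorem5p5:
  fixes N :: "real^2 \<Rightarrow> real" and a :: "nat \<Rightarrow> real^2"
  assumes "minkowski_norm N"
    and "\<forall>i\<in>{1,2,3}. a i \<noteq> 0"
  shows "floating_FT_config N 0 [a 1, a 2, a 3] \<longleftrightarrow>
           \<not> pointed_config 0 [a 1, a 2, a 3] \<and>
           (\<forall>i\<in>{1::nat,2,3}. \<forall>j\<in>{1,2,3}. i \<noteq> j \<longrightarrow> critical_angle N (a i) 0 (a j))"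
proof -
  note MN = assms(1)
  have nz: "a 1 \<noteq> 0" "a 2 \<noteq> 0" "a 3 \<noteq> 0" using assms(2) by auto
  have P: "pointed_config 0 [a 1, a 2, a 3] \<longleftrightarrow> pointed3 (a 1) (a 2) (a 3)" by (rule pointed_iff[OF nz])
  show ?thesis
  proof
    assume F: "floating_FT_config N 0 [a 1, a 2, a 3]"
    hence FT: "FT_point N 0 [a 1, a 2, a 3]" unfolding floating_FT_config_def by blast
    have "ZS3 N (a 1) (a 2) (a 3)" using FT_hard[OF MN FT] unfolding ZS3_def by blast
    hence np: "\<not> pointed3 (a 1) (a 2) (a 3)" by (rule ZS_notpointed[OF MN nz])
    have f2: "FT_point N 0 [a 2, a 1, a 3]" by (rule FT_perm(1)[OF MN FT])
    have f3: "FT_point N 0 [a 1, a 3, a 2]" by (rule FT_perm(2)[OF MN FT])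
    have f4: "FT_point N 0 [a 3, a 1, a 2]" by (rule FT_perm(1)[OF MN f3])
    have f5: "FT_point N 0 [a 2, a 3, a 1]" by (rule FT_perm(2)[OF MN f2])
    have f6: "FT_point N 0 [a 3, a 2, a 1]" by (rule FT_perm(2)[OF MN f4])
    have c: "critical_angle N (a 1) 0 (a 2)" "critical_angle N (a 2) 0 (a 1)"
      "critical_angle N (a 1) 0 (a 3)" "critical_angle N (a 3) 0 (a 1)"
      "critical_angle N (a 2) 0 (a 3)" "critical_angle N (a 3) 0 (a 2)"
      using crit_of_FT[OF MN FT nz(3)] crit_of_FT[OF MN f2 nz(3)] crit_of_FT[OF MN f3 nz(2)]
        crit_of_FT[OF MN f4 nz(2)] crit_of_FT[OF MN f5 nz(1)] crit_of_FT[OF MN f6 nz(1)] by auto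
    have "\<forall>i\<in>{1::nat,2,3}. \<forall>j\<in>{1,2,3}. i \<noteq> j \<longrightarrow> critical_angle N (a i) 0 (a j)"
      using c by auto
    thus "\<not> pointed_config 0 [a 1, a 2, a 3] \<and>
           (\<forall>i\<in>{1::nat,2,3}. \<forall>j\<in>{1,2,3}. i \<noteq> j \<longrightarrow> critical_angle N (a i) 0 (a j))"
      using np P by blast
  next
    assume H: "\<not> pointed_config 0 [a 1, a 2, a 3] \<and>
           (\<forall>i\<in>{1::nat,2,3}. \<forall>j\<in>{1,2,3}. i \<noteq> j \<longrightarrow> critical_angle N (a i) 0 (a j))"
    have np: "\<not> pointed3 (a 1) (a 2) (a 3)" using H P by blast
    have c12: "crit_dual N (a 1) (a 2)" using H cd_of_crit[OF MN] by simp
    have c13: "crit_dual N (a 1) (a 3)" using H cd_of_crit[OF MN] by simp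
    have c23: "crit_dual N (a 2) (a 3)" using H cd_of_crit[OF MN] by simp
    have Z: "ZS3 N (a 1) (a 2) (a 3)"
    proof -
      consider "dt (a 1) (a 2) > 0 \<and> dt (a 2) (a 3) > 0 \<and> dt (a 3) (a 1) > 0"
        | "dt (a 1) (a 2) < 0 \<and> dt (a 2) (a 3) < 0 \<and> dt (a 3) (a 1) < 0"
        | "opp (a 1) (a 2)" | "opp (a 1) (a 3)" | "opp (a 2) (a 3)"
        using classify[OF nz np] by blast
      thus ?thesis
      proof cases
        case 1 thus ?thesis using core_N1[OF MN nz _ _ _ c12 c13 c23] by blast
      next
        case 2
        have "dt (a 2) (a 1) > 0" "dt (a 1) (a 3) > 0" "dt (a 3) (a 2) > 0"
          using 2 dt_swap[of "a 2" "a 1"] dt_swap[of "a 1" "a 3"] dt_swap[of "a 3" "a 2"] by auto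
        hence "ZS3 N (a 2) (a 1) (a 3)"
          using core_N1[OF MN nz(2,1,3) _ _ _ crit_dual_sym[OF MN c12] c23 c13] by blast
        thus ?thesis by (rule ZS3_12[OF MN])
      next
        case 3 thus ?thesis using N2gen[OF MN nz 3 c12 c13 c23] by blast
      next
        case 4
        have "ZS3 N (a 1) (a 3) (a 2)"
          using N2gen[OF MN nz(1,3,2) 4 c13 c12 crit_dual_sym[OF MN c23]] by blast
        thus ?thesis by (rule ZS3_23[OF MN])
      next
        case 5
        have "ZS3 N (a 2) (a 3) (a 1)"
          using N2gen[OF MN nz(2,3,1) 5 c23 crit_dual_sym[OF MN c12] crit_dual_sym[OF MN c13]] by blast
        hence "ZS3 N (a 2) (a 1) (a 3)" by (rule ZS3_23[OF MN])
        thus ?thesis by (rule ZS3_12[OF MN])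
      qed
    qed
    then obtain w1 w2 w3 where "nm N w1 (a 1)" "nm N w2 (a 2)" "nm N w3 (a 3)" "w1 + w2 + w3 = 0"
      unfolding ZS3_def by blast
    hence "FT_point N 0 [a 1, a 2, a 3]" by (rule FT_easy[OF MN])
    thus "floating_FT_config N 0 [a 1, a 2, a 3]" unfolding floating_FT_config_def using nz by auto
  qed
qed

end
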